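(* Every program $P$ of the reactive language defined in the context is deterministic: coinductively, for every set of input signals $I\subseteq \mathit{Int}$, if $P\xrightarrow{I/O_1}P_1$ and $P\xrightarrow{I/O_2}P_2$, then $O_1=O_2$, $P_1$ and $P_2$ are equal up to renaming, and $P_1$ is again deterministic in the same sense.
   Context: Fix a countable set of signal names $s,s',\dots$ and a finite set $\mathit{Int}$ of signal names (the observable interface). A signal environment $E$ is a partial function from signal names to $\{\mathit{true},\mathit{false}\}$ whose finite domain $\mathrm{dom}(E)$ contains $\mathit{Int}$; $E[s:=\mathit{true}]$ denotes update. Threads are given by the grammar $T ::= () \mid (\mathsf{emit}\ s) \mid (\mathsf{local}\ s\ T) \mid (\mathsf{thread}\ T) \mid (\mathsf{when}\ s\ T) \mid (\mathsf{watch}\ s\ T) \mid A(\vec s) \mid (T;T)$, where $A(\vec s)$ are thread identifiers with signal parameters, each defined by exactly one equation $A(\vec x)=T$; $\mathsf{local}\ s$ binds $s$ in $T$. $\mathrm{sig}(T)$ is the set of free signals of $T$, and $\mathrm{sig}(P)$ the union over threads of a multiset $P$. A program is a finite non-empty multiset of threads. Atomic thread execution $(T,E)\Rightarrow_P (T',E')$ ($P$ a multiset of spawned threads, $\cup$ multiset union) is the least relation closed under: (T1) $((),E)\Rightarrow_\emptyset((),E)$; (T2) $(\mathsf{emit}\ s,E)\Rightarrow_\emptyset((),E[s:=\mathit{true}])$; (T3) if $s'\notin\mathrm{dom}(E)$ and $([s'/s]T,E\cup\{s'\mapsto\mathit{false}\})\Rightarrow_P(T',E')$ then $(\mathsf{local}\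 s\ T,E)\Rightarrow_P(T',E')$; (T4) $(\mathsf{thread}\ T,E)\Rightarrow_{\{T\}}((),E)$; (T5) if $A(\vec x)=T$ and $([\vec s/\vec x]T,E)\Rightarrow_P(T',E')$ then $(A(\vec s),E)\Rightarrow_P(T',E')$; (T6) if $E(s)=\mathit{false}$ then $(\mathsf{when}\ s\ T,E)\Rightarrow_\emptyset(\mathsf{when}\ s\ T,E)$; (T7) if $E(s)=\mathit{true}$ and $(T,E)\Rightarrow_P((),E')$ then $(\mathsf{when}\ s\ T,E)\Rightarrow_P((),E')$; (T8) if $E(s)=\mathit{true}$, $(T,E)\Rightarrow_P(T',E')$, $T'\neq()$ then $(\mathsf{when}\ s\ T,E)\Rightarrow_P(\mathsf{when}\ s\ T',E')$; (T9) if $(T,E)\Rightarrow_P((),E')$ then $(\mathsf{watch}\ s\ T,E)\Rightarrow_P((),E')$; (T10) if $(T,E)\Rightarrow_P(T',E')$, $T'\neq()$ then $(\mathsf{watch}\ s\ T,E)\Rightarrow_P(\mathsf{watch}\ s\ T',E')$; (T11) if $(T_1,E)\Rightarrow_{P_1}((),E_1)$ and $(T_2,E_1)\Rightarrow_{P_2}(T',E')$ then $(T_1;T_2,E)\Rightarrow_{P_1\cup P_2}(T',E')$; (T12) if $(T_1,E)\Rightarrow_P(T',E')$, $T'\neq()$ then $(T_1;T_2,E)\Rightarrow_P(T';T_2,E')$. $(T,E)$ is stuck, written $(T,E)\ddagger$, if $(T,E)\Rightarrow_\emptyset(T,E)$. The end-of-instant abort function: $\lfloor P\rfloor_E=\{\lfloor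 T\rfloor_E\mid T\in P\}$ (multiset), $\lfloor()\rfloor_E=()$, $\lfloor T;T'\rfloor_E=\lfloor T\rfloor_E;T'$, $\lfloor\mathsf{when}\ s\ T\rfloor_E=\mathsf{when}\ s\ \lfloor T\rfloor_E$ if $E(s)=\mathit{true}$ and $\mathsf{when}\ s\ T$ otherwise, $\lfloor\mathsf{watch}\ s\ T\rfloor_E=()$ if $E(s)=\mathit{true}$ and $\mathsf{watch}\ s\ \lfloor T\rfloor_E$ otherwise. Instant execution $(P,E)\Downarrow(P'',E'')$ is the least relation with: (P1) if $(T,E)\ddagger$ for all $T\in P$ then $(P,E)\Downarrow(\lfloor P\rfloor_E,E)$; (P2) if some $T\in P$ has $\neg(T,E)\ddagger$, $(T,E)\Rightarrow_{P'}(T',E')$ and $((P\setminus\{T\})\cup\{T'\}\cup P',E')\Downarrow(P'',E'')$, then $(P,E)\Downarrow(P'',E'')$ (the choice of $T$ is nondeterministic). Input/output transitions: for $I,O\subseteq\mathit{Int}$, $P\xrightarrow{I/O}P'$ iff $(P,E_{I,P})\Downarrow(P',E')$ and $O=\{s\in\mathit{Int}\mid E'(s)=\mathit{true}\}$, where $E_{I,P}(s)=\mathit{true}$ if $s\in I$, $\mathit{false}$ if $s\in(\mathit{Int}\cup\mathrm{sig}(P))\setminus I$, undefined otherwise. Two programs $P,P'$ are equal up to renaming if there is a bijection $\mathrm{sig}(P)\to\mathrm{sig}(P')$ that is the identity on $\mathit{Int}$ and whose application to $P$ yields $P'$. A program $P$ is deterministic (coinductive definition: the greatest predicate such that) for every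 $I$, whenever $P\xrightarrow{I/O_1}P_1$ and $P\xrightarrow{I/O_2}P_2$, then $O_1=O_2$, $P_1=P_2$ up to renaming, and $P_1$ is deterministic. *)

theory Defs
  imports Main "HOL-Library.Multiset"
begin

text \<open>Binders are represented in locally nameless style: a signal reference is
  either a free name or a de Bruijn index bound by an enclosing local.
  This makes alpha-equivalent threads syntactically equal and makes
  the substitution of the rules capture-avoiding.\<close>

type_synonym sig = nat
type_synonym ident = nat

datatype sref = FreeS sig | BoundS nat

datatype thread =
    TNil
  | Emit sref
  | Local thread
  | Spawn thread
  | When sref thread
  | Watch sref thread
  | Call ident "sref list"
  | Seq thread thread

type_synonym env = "sig \<Rightarrow> bool option"

type_synonym tdefs = "ident \<Rightarrow> sig list \<times> thread"

fun sigr :: "sref \<Rightarrow> sig set" where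
  "sigr (FreeS s) = {s}"
| "sigr (BoundS _) = {}"

fun sigT :: "thread \<Rightarrow> sig set" where
  "sigT TNil = {}"
| "sigT (Emit r) = sigr r"
| "sigT (Local T) = sigT T"
| "sigT (Spawn T) = sigT T"
| "sigT (When r T) = sigr r \<union> sigT T"
| "sigT (Watch r T) = sigr r \<union> sigT T"
| "sigT (Call A rs) = (\<Union>r\<in>set rs. sigr r)"
| "sigT (Seq T1 T2) = sigT T1 \<union> sigT T2"

definition sigP :: "thread multiset \<Rightarrow> sig set" where
  "sigP P = (\<Union>T\<in>set_mset P. sigT T)"

fun lcr :: "nat \<Rightarrow> sref \<Rightarrow> bool" where
  "lcr k (FreeS _) = True"
| "lcr k (BoundS i) = (i < k)"

fun lc_at :: "nat \<Rightarrow> thread \<Rightarrow> bool" where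
  "lc_at k TNil = True"
| "lc_at k (Emit r) = lcr k r"
| "lc_at k (Local T) = lc_at (Suc k) T"
| "lc_at k (Spawn T) = lc_at k T"
| "lc_at k (When r T) = (lcr k r \<and> lc_at k T)"
| "lc_at k (Watch r T) = (lcr k r \<and> lc_at k T)"
| "lc_at k (Call A rs) = (\<forall>r\<in>set rs. lcr k r)"
| "lc_at k (Seq T1 T2) = (lc_at k T1 \<and> lc_at k T2)"

abbreviation lc :: "thread \<Rightarrow> bool" where "lc T \<equiv> lc_at 0 T"

fun openr :: "nat \<Rightarrow> sig \<Rightarrow> sref \<Rightarrow> sref" where
  "openr k s (FreeS x) = FreeS x"
| "openr k s (BoundS i) = (if i = k then FreeS s else BoundS i)"

fun openT :: "nat \<Rightarrow> sig \<Rightarrow> thread \<Rightarrow> thread" where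
  "openT k s TNil = TNil"
| "openT k s (Emit r) = Emit (openr k s r)"
| "openT k s (Local T) = Local (openT (Suc k) s T)"
| "openT k s (Spawn T) = Spawn (openT k s T)"
| "openT k s (When r T) = When (openr k s r) (openT k s T)"
| "openT k s (Watch r T) = Watch (openr k s r) (openT k s T)"
| "openT k s (Call A rs) = Call A (map (openr k s) rs)"
| "openT k s (Seq T1 T2) = Seq (openT k s T1) (openT k s T2)"

fun renr :: "(sig \<Rightarrow> sig) \<Rightarrow> sref \<Rightarrow> sref" where
  "renr f (FreeS x) = FreeS (f x)"
| "renr f (BoundS i) = BoundS i"

fun renT :: "(sig \<Rightarrow> sig) \<Rightarrow> thread \<Rightarrow> thread" where
  "renT f TNil = TNil"
| "renT f (Emit r) = Emit (renr f r)"
| "renT f (Local T) = Local (renT f T)"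
| "renT f (Spawn T) = Spawn (renT f T)"
| "renT f (When r T) = When (renr f r) (renT f T)"
| "renT f (Watch r T) = Watch (renr f r) (renT f T)"
| "renT f (Call A rs) = Call A (map (renr f) rs)"
| "renT f (Seq T1 T2) = Seq (renT f T1) (renT f T2)"

definition substf :: "sig list \<Rightarrow> sig list \<Rightarrow> sig \<Rightarrow> sig" where
  "substf xs ss y = (case map_of (zip xs ss) y of Some s \<Rightarrow> s | None \<Rightarrow> y)"

fun envv :: "env \<Rightarrow> sref \<Rightarrow> bool option" where
  "envv E (FreeS s) = E s"
| "envv E (BoundS _) = None"

inductive step :: "tdefs \<Rightarrow> thread \<Rightarrow> env \<Rightarrow> thread multiset \<Rightarrow> thread \<Rightarrow> env \<Rightarrow> bool"
  for D :: tdefs where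
  T1: "step D TNil E {#} TNil E"
| T2: "step D (Emit (FreeS s)) E {#} TNil (E(s \<mapsto> True))"
| T3: "\<lbrakk> E s' = None; step D (openT 0 s' T) (E(s' \<mapsto> False)) P T' E' \<rbrakk>
       \<Longrightarrow> step D (Local T) E P T' E'"
| T4: "step D (Spawn T) E {#T#} TNil E"
| T5: "\<lbrakk> D A = (xs, T); length xs = length ss;
         step D (renT (substf xs ss) T) E P T' E' \<rbrakk>
       \<Longrightarrow> step D (Call A (map FreeS ss)) E P T' E'"
| T6: "envv E r = Some False \<Longrightarrow> step D (When r T) E {#} (When r T) E"
| T7: "\<lbrakk> envv E r = Some True; step D T E P TNil E' \<rbrakk>
       \<Longrightarrow> step D (When r T) E P TNil E'"
| T8: "\<lbrakk> envv E r = Some True; step D T E P T' E'; T' \<noteq> TNil \<rbrakk>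
       \<Longrightarrow> step D (When r T) E P (When r T') E'"
| T9: "step D T E P TNil E' \<Longrightarrow> step D (Watch r T) E P TNil E'"
| T10: "\<lbrakk> step D T E P T' E'; T' \<noteq> TNil \<rbrakk>
       \<Longrightarrow> step D (Watch r T) E P (Watch r T') E'"
| T11: "\<lbrakk> step D T1 E P1 TNil E1; step D T2 E1 P2 T' E' \<rbrakk>
       \<Longrightarrow> step D (Seq T1 T2) E (P1 + P2) T' E'"
| T12: "\<lbrakk> step D T1 E P T' E'; T' \<noteq> TNil \<rbrakk>
       \<Longrightarrow> step D (Seq T1 T2) E P (Seq T' T2) E'"

definition stuck :: "tdefs \<Rightarrow> thread \<Rightarrow> env \<Rightarrow> bool" where
  "stuck D T E \<longleftrightarrow> step D T E {#} T E"

text \<open>End-of-instant abort function. It is only specified by the paper on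
  (), ;, when and watch; on the remaining forms (which are never stuck)
  it is taken to be the identity.\<close>
fun abortT :: "env \<Rightarrow> thread \<Rightarrow> thread" where
  "abortT E TNil = TNil"
| "abortT E (Seq T T') = Seq (abortT E T) T'"
| "abortT E (When r T) = (if envv E r = Some True then When r (abortT E T) else When r T)"
| "abortT E (Watch r T) = (if envv E r = Some True then TNil else Watch r (abortT E T))"
| "abortT E T = T"

inductive instant :: "tdefs \<Rightarrow> thread multiset \<Rightarrow> env \<Rightarrow> thread multiset \<Rightarrow> env \<Rightarrow> bool"
  for D :: tdefs where
  P1: "(\<forall>T\<in>#P. stuck D T E) \<Longrightarrow> instant D P E (image_mset (abortT E) P) E"
| P2: "\<lbrakk> T \<in># P; \<not> stuck D T E; step D T E P' T' E';
         instant D ((P - {#T#}) + {#T'#} + P') E' P'' E'' \<rbrakk>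
       \<Longrightarrow> instant D P E P'' E''"

definition init_env :: "sig set \<Rightarrow> sig set \<Rightarrow> thread multiset \<Rightarrow> env" where
  "init_env Intf I P s =
     (if s \<in> I then Some True
      else if s \<in> (Intf \<union> sigP P) - I then Some False else None)"

definition io_trans :: "tdefs \<Rightarrow> sig set \<Rightarrow> thread multiset \<Rightarrow> sig set \<Rightarrow> sig set \<Rightarrow> thread multiset \<Rightarrow> bool" where
  "io_trans D Intf P I Out P' \<longleftrightarrow> I \<subseteq> Intf \<and> Out \<subseteq> Intf \<and>
     (\<exists>E'. instant D P (init_env Intf I P) P' E' \<and> Out = {s \<in> Intf. E' s = Some True})"

definition eq_ren :: "sig set \<Rightarrow> thread multiset \<Rightarrow> thread multiset \<Rightarrow> bool" where
  "eq_ren Intf P P' \<longleftrightarrow> (\<exists>f. bij_betw f (sigP P) (sigP P') \<and>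
     (\<forall>s\<in>sigP P \<inter> Intf. f s = s) \<and> image_mset (renT f) P = P')"

coinductive deterministic :: "tdefs \<Rightarrow> sig set \<Rightarrow> thread multiset \<Rightarrow> bool"
  for D :: tdefs and Intf :: "sig set" where
  "(\<And>I Out1 Out2 P1 P2. \<lbrakk> I \<subseteq> Intf; io_trans D Intf P I Out1 P1; io_trans D Intf P I Out2 P2 \<rbrakk>
      \<Longrightarrow> Out1 = Out2 \<and> eq_ren Intf P1 P2 \<and> deterministic D Intf P1)
   \<Longrightarrow> deterministic D Intf P"

definition wf_defs :: "tdefs \<Rightarrow> bool" where
  "wf_defs D \<longleftrightarrow> (\<forall>A. distinct (fst (D A)) \<and> lc (snd (D A)) \<and>
                       sigT (snd (D A)) \<subseteq> set (fst (D A)))"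

definition program :: "thread multiset \<Rightarrow> bool" where
  "program P \<longleftrightarrow> P \<noteq> {#} \<and> (\<forall>T\<in>#P. lc T)"

end

theory Submission
  imports Defs
begin


section \<open>Renaming lemmas\<close>

lemma renr_cong: "(\<forall>x\<in>sigr r. f x = g x) \<Longrightarrow> renr f r = renr g r"
  by (cases r) auto

lemma renT_cong: "(\<forall>x\<in>sigT T. f x = g x) \<Longrightarrow> renT f T = renT g T"
  by (induction T) (auto intro: renr_cong)

lemma renr_fix: "(\<forall>x\<in>sigr r. f x = x) \<Longrightarrow> renr f r = r"
  by (cases r) auto

lemma renT_fix: "(\<forall>x\<in>sigT T. f x = x) \<Longrightarrow> renT f T = T"
  by (induction T) (auto intro: renr_fix map_idI)

lemma renr_comp: "renr f (renr g r) = renr (f \<circ> g) r"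
  by (cases r) auto

lemma renT_comp: "renT f (renT g T) = renT (f \<circ> g) T"
  by (induction T) (auto simp: renr_comp comp_def)

lemma sigr_renr: "sigr (renr f r) = f ` sigr r"
  by (cases r) auto

lemma sigT_renT: "sigT (renT f T) = f ` sigT T"
  by (induction T) (auto simp: sigr_renr image_UN)

lemma renr_openr: "renr f (openr k s r) = openr k (f s) (renr f r)"
  by (cases r) auto

lemma renT_openT: "renT f (openT k s T) = openT k (f s) (renT f T)"
  by (induction T arbitrary: k) (auto simp: renr_openr)

lemma sigr_openr: "sigr (openr k s r) \<subseteq> insert s (sigr r)"
  by (cases r) auto

lemma sigT_openT: "sigT (openT k s T) \<subseteq> insert s (sigT T)"
  by (induction T arbitrary: k) (use sigr_openr in fastforce)+

lemma finite_sigr: "finite (sigr r)" by (cases r) auto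

lemma finite_sigT: "finite (sigT T)"
  by (induction T) (auto simp: finite_sigr)

definition renE :: "(sig \<Rightarrow> sig) \<Rightarrow> env \<Rightarrow> env" where
  "renE \<pi> E = E \<circ> inv \<pi>"

lemma renE_app[simp]: "bij \<pi> \<Longrightarrow> renE \<pi> E (\<pi> x) = E x"
  by (simp add: renE_def bij_is_inj)

lemma renE_id[simp]: "renE id E = E"
  by (simp add: renE_def)

lemma renE_comp: "bij \<pi> \<Longrightarrow> bij \<sigma> \<Longrightarrow> renE \<pi> (renE \<sigma> E) = renE (\<pi> \<circ> \<sigma>) E"
  unfolding renE_def by (rule ext) (simp add: o_inv_distrib)

lemma renE_inv[simp]: "bij \<pi> \<Longrightarrow> renE (inv \<pi>) (renE \<pi> E) = E"
  unfolding renE_def by (rule ext) (simp add: inv_inv_eq bij_is_inj)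

lemma dom_renE: "bij \<pi> \<Longrightarrow> dom (renE \<pi> E) = \<pi> ` dom E"
proof (rule set_eqI)
  fix x assume b: "bij \<pi>"
  have "x = \<pi> (inv \<pi> x)" using b by (simp add: bij_is_surj surj_f_inv_f)
  then show "x \<in> dom (renE \<pi> E) \<longleftrightarrow> x \<in> \<pi> ` dom E"
    using b unfolding renE_def dom_def
    by (metis (mono_tags, lifting) bij_is_inj comp_apply image_iff inv_f_f mem_Collect_eq)
qed

lemma envv_ren: "bij \<pi> \<Longrightarrow> envv (renE \<pi> E) (renr \<pi> r) = envv E r"
  by (cases r) auto

lemma envv_true: "envv E r = Some True \<Longrightarrow> \<exists>s. r = FreeS s \<and> E s = Some True"
  by (cases r) auto

lemma substf_in:
  assumes "length xs = length ss" "y \<in> set xs"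
  shows "f (substf xs ss y) = substf xs (map f ss) y" "substf xs ss y \<in> set ss"
proof -
  obtain s where s: "map_of (zip xs ss) y = Some s"
    using assms map_of_zip_is_None[OF assms(1), of y] by fastforce
  have "map_of (zip xs (map f ss)) y = map_option f (map_of (zip xs ss) y)"
    by (simp add: zip_map2 map_of_map)
  then show "f (substf xs ss y) = substf xs (map f ss) y"
    using s by (simp add: substf_def)
  show "substf xs ss y \<in> set ss"
    using s map_of_SomeD[OF s] by (auto simp: substf_def dest: set_zip_rightD)
qed

lemma ren_subst:
  assumes "length xs = length ss" "sigT T \<subseteq> set xs"
  shows "renT f (renT (substf xs ss) T) = renT (substf xs (map f ss)) T"
  unfolding renT_comp using assms substf_in(1)[OF assms(1)]
  by (intro renT_cong) auto

lemma sig_subst: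
  assumes "length xs = length ss" "sigT T \<subseteq> set xs"
  shows "sigT (renT (substf xs ss) T) \<subseteq> set ss"
  using assms substf_in(2)[OF assms(1)] by (auto simp: sigT_renT)

lemma bij_upd_inv: "bij \<pi> \<Longrightarrow> renE \<pi> (E(s := v)) = (renE \<pi> E)(\<pi> s := v)"
  unfolding renE_def by (rule ext) (auto simp: bij_is_inj bij_inv_eq_iff)

lemma sigP_plus[simp]: "sigP (A + B) = sigP A \<union> sigP B"
  by (auto simp: sigP_def)
lemma sigP_single[simp]: "sigP {#t#} = sigT t"
  by (auto simp: sigP_def)
lemma sigP_add[simp]: "sigP (add_mset t A) = sigT t \<union> sigP A"
  by (auto simp: sigP_def)
lemma sigP_empty[simp]: "sigP {#} = {}"
  by (auto simp: sigP_def)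
lemma sigP_diff: "sigP (A - B) \<subseteq> sigP A"
  by (auto simp: sigP_def dest: in_diffD)
lemma sigP_image: "sigP (image_mset (renT f) P) = f ` sigP P"
  by (auto simp: sigP_def sigT_renT)
lemma sigT_sigP: "t \<in># P \<Longrightarrow> sigT t \<subseteq> sigP P"
  by (auto simp: sigP_def)
lemma finite_sigP: "finite (sigP P)"
  by (auto simp: sigP_def finite_sigT)



section \<open>Micro steps\<close>

inductive ms :: "tdefs \<Rightarrow> thread \<Rightarrow> env \<Rightarrow> thread multiset \<Rightarrow> thread \<Rightarrow> env \<Rightarrow> bool"
  for D :: tdefs where
  M_emit: "ms D (Emit (FreeS s)) E {#} TNil (E(s \<mapsto> True))"
| M_local: "E s' = None \<Longrightarrow> ms D (Local T) E {#} (openT 0 s' T) (E(s' \<mapsto> False))"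
| M_spawn: "ms D (Spawn T) E {#T#} TNil E"
| M_call: "\<lbrakk> D A = (xs, T); length xs = length ss \<rbrakk>
       \<Longrightarrow> ms D (Call A (map FreeS ss)) E {#} (renT (substf xs ss) T) E"
| M_whennil: "envv E r = Some True \<Longrightarrow> ms D (When r TNil) E {#} TNil E"
| M_when: "\<lbrakk> envv E r = Some True; ms D T E P T' E' \<rbrakk> \<Longrightarrow> ms D (When r T) E P (When r T') E'"
| M_watchnil: "ms D (Watch r TNil) E {#} TNil E"
| M_watch: "ms D T E P T' E' \<Longrightarrow> ms D (Watch r T) E P (Watch r T') E'"
| M_seqnil: "ms D (Seq TNil T2) E {#} T2 E"
| M_seq: "ms D T1 E P T1' E' \<Longrightarrow> ms D (Seq T1 T2) E P (Seq T1' T2) E'"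

inductive_cases ms_TNil: "ms D TNil E P T' E'"

lemma ms_TNil_iff[simp]: "\<not> ms D TNil E P T' E'"
  by (auto elim: ms_TNil)

definition trues_le :: "env \<Rightarrow> env \<Rightarrow> bool" where
  "trues_le E G \<longleftrightarrow> (\<forall>x. E x = Some True \<longrightarrow> G x = Some True)"

lemma ms_mono: "ms D T E P T' E' \<Longrightarrow> trues_le E E'"
  by (induction rule: ms.induct) (auto simp: trues_le_def)

lemma trues_le_envv: "trues_le E G \<Longrightarrow> envv E r = Some True \<Longrightarrow> envv G r = Some True"
  by (cases r) (auto simp: trues_le_def)

lemma ms_class:
  "ms D T E P T' E' \<Longrightarrow> sigT T \<subseteq> dom E \<Longrightarrow>
   E' = E \<or> (\<exists>s. E s \<noteq> None \<and> E' = E(s \<mapsto> True)) \<or> (\<exists>s. E s = None \<and> E' = E(s \<mapsto> False))"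
  by (induction rule: ms.induct) auto

lemma ms_inv:
  assumes "ms D T E P T' E'" "wf_defs D" "sigT T \<subseteq> dom E"
  shows "sigT T' \<subseteq> dom E' \<and> sigP P \<subseteq> dom E' \<and> dom E \<subseteq> dom E' \<and> (finite (dom E) \<longrightarrow> finite (dom E'))"
  using assms
proof (induction rule: ms.induct)
  case (M_local E s' T)
  have d: "dom (E(s' \<mapsto> False)) = insert s' (dom E)" by simp
  have "sigT (openT 0 s' T) \<subseteq> insert s' (dom E)" using sigT_openT[of 0 s' T] M_local by auto
  then show ?case unfolding d by (intro conjI) auto
next
  case (M_call A xs T ss E)
  then have "sigT T \<subseteq> set xs" unfolding wf_defs_def by (metis snd_conv fst_conv)
  then show ?case using sig_subst[OF M_call(2)] M_call by (simp, blast)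
next
  case (M_emit s E)
  have d: "dom (E(s \<mapsto> True)) = insert s (dom E)" by simp
  show ?case unfolding d by (simp add: subset_insertI)
next
  case (M_spawn T E)
  then show ?case by simp
next
  case (M_whennil E r)
  then show ?case by simp
next
  case (M_when E r T P T' E')
  then show ?case by (simp, blast)
next
  case (M_watchnil r E)
  then show ?case by simp
next
  case (M_watch T E P T' E' r)
  then show ?case by (simp, blast)
next
  case (M_seqnil T2 E)
  then show ?case by simp
next
  case (M_seq T1 E P T1' E' T2)
  then show ?case by (simp, blast)
qed

lemma ms_frame:
  assumes "ms D T E P T' E'" "trues_le E G" "\<forall>x. E x = None \<longrightarrow> E' x \<noteq> None \<longrightarrow> G x = None"
  shows "ms D T G P T' (\<lambda>x. if E' x = E x then G x else E' x)"
  using assms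
proof (induction rule: ms.induct)
  case (M_emit s E)
  show ?case
  proof (cases "E s = Some True")
    case True
    then have "G s = Some True" using M_emit by (auto simp: trues_le_def)
    then have "G(s \<mapsto> True) = G" by auto
    moreover have "(\<lambda>x. if (E(s \<mapsto> True)) x = E x then G x else (E(s \<mapsto> True)) x) = G"
      using True by auto
    ultimately show ?thesis using ms.M_emit[of D s G] by simp
  next
    case False
    then have "(\<lambda>x. if (E(s \<mapsto> True)) x = E x then G x else (E(s \<mapsto> True)) x) = G(s \<mapsto> True)"
      by (auto simp: fun_eq_iff)
    then show ?thesis using ms.M_emit[of D s G] by simp
  qed
next
  case (M_local E s' T)
  then have "G s' = None" by (metis fun_upd_same option.simps(3))
  moreover have "(\<lambda>x. if (E(s' \<mapsto> False)) x = E x then G x else (E(s' \<mapsto> False)) x) = G(s' \<mapsto> False)"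
    using M_local by (auto simp: fun_eq_iff)
  ultimately show ?case using ms.M_local[of G s' D T] by simp
next
  case (M_when E r T P T' E')
  then show ?case by (auto intro!: ms.M_when dest: trues_le_envv)
next
  case (M_whennil E r)
  then show ?case by (auto intro!: ms.M_whennil dest: trues_le_envv)
qed (auto intro: ms.intros)

lemma ms_equiv:
  assumes "ms D T E P T' E'" "wf_defs D" "bij \<pi>"
  shows "ms D (renT \<pi> T) (renE \<pi> E) (image_mset (renT \<pi>) P) (renT \<pi> T') (renE \<pi> E')"
  using assms
proof (induction rule: ms.induct)
  case (M_emit s E)
  have h: "renE \<pi> (E(s \<mapsto> True)) = (renE \<pi> E)(\<pi> s \<mapsto> True)" using M_emit(2) by (rule bij_upd_inv)
  show ?case unfolding h renT.simps renr.simps image_mset_empty by (rule ms.M_emit)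
next
  case (M_local E s' T)
  then have n: "(renE \<pi> E) (\<pi> s') = None" by simp
  have h: "renE \<pi> (E(s' \<mapsto> False)) = (renE \<pi> E)(\<pi> s' \<mapsto> False)" using \<open>bij \<pi>\<close> by (rule bij_upd_inv)
  show ?case unfolding h renT.simps renT_openT image_mset_empty using n by (rule ms.M_local)
next
  case (M_call A xs T ss E)
  then have "sigT T \<subseteq> set xs" unfolding wf_defs_def by (metis snd_conv fst_conv)
  have c: "renT \<pi> (Call A (map FreeS ss)) = Call A (map FreeS (map \<pi> ss))"
    by (induction ss) auto
  have r: "renT \<pi> (renT (substf xs ss) T) = renT (substf xs (map \<pi> ss)) T"
    using ren_subst[OF M_call(2) \<open>sigT T \<subseteq> set xs\<close>] .
  show ?case unfolding c r image_mset_empty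
    by (rule ms.M_call) (simp_all add: M_call)
next
  case (M_whennil E r)
  show ?case unfolding renT.simps image_mset_empty
    by (rule ms.M_whennil) (use envv_ren[OF \<open>bij \<pi>\<close>, of E r] M_whennil in auto)
next
  case (M_when E r T P T' E')
  show ?case unfolding renT.simps
    by (rule ms.M_when) (use envv_ren[OF \<open>bij \<pi>\<close>, of E r] M_when in auto)
qed (auto intro: ms.intros)



definition sw :: "sig \<Rightarrow> sig \<Rightarrow> sig \<Rightarrow> sig" where
  "sw a b = (\<lambda>z. if z = a then b else if z = b then a else z)"

lemma sw_invol: "sw a b \<circ> sw a b = id"
  by (auto simp: sw_def fun_eq_iff)
lemma sw_invol'[simp]: "sw a b (sw a b x) = x"
  by (auto simp: sw_def)
lemma bij_sw: "bij (sw a b)"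
  by (metis bij_def comp_eq_id_dest id_apply inj_on_inverseI surj_def sw_invol')
lemma inv_sw: "inv (sw a b) = sw a b"
  by (metis bij_sw inv_equality sw_invol')

lemma renT_id_fun: "renT id = id"
  by (rule ext) (simp add: renT_fix)

lemma ex_id_ren:
  "\<exists>\<pi>. bij \<pi> \<and> (\<forall>a\<in>A. \<pi> a = a) \<and> T = renT \<pi> T \<and> P = image_mset (renT \<pi>) P \<and> E = renE \<pi> E"
  by (rule exI[of _ id]) (auto simp: renT_fix renT_id_fun)

lemma ex_id_ren':
  "T2 = T1 \<Longrightarrow> P2 = P1 \<Longrightarrow> E2 = E1 \<Longrightarrow> \<exists>\<pi>. bij \<pi> \<and> (\<forall>a\<in>A. \<pi> a = a) \<and> T2 = renT \<pi> T1 \<and> P2 = image_mset (renT \<pi>) P1 \<and> E2 = renE \<pi> E1"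
  using ex_id_ren by blast

inductive_cases ms_EmitE: "ms D (Emit r) E P T' E'"
inductive_cases ms_LocalE: "ms D (Local T) E P T' E'"
inductive_cases ms_SpawnE: "ms D (Spawn T) E P T' E'"
inductive_cases ms_CallE: "ms D (Call A rs) E P T' E'"
inductive_cases ms_WhenE: "ms D (When r T) E P T' E'"
inductive_cases ms_WatchE: "ms D (Watch r T) E P T' E'"
inductive_cases ms_SeqE: "ms D (Seq T1 T2) E P T' E'"

lemma ms_det:
  assumes "ms D T E P1 T1 E1" "ms D T E P2 T2 E2" "sigT T \<subseteq> dom E"
  shows "\<exists>\<pi>. bij \<pi> \<and> (\<forall>a\<in>dom E. \<pi> a = a) \<and> T2 = renT \<pi> T1 \<and>
             P2 = image_mset (renT \<pi>) P1 \<and> E2 = renE \<pi> E1"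
  using assms
proof (induction arbitrary: P2 T2 E2 rule: ms.induct)
  case (M_emit s E)
  from M_emit(1) show ?case by (rule ms_EmitE) (rule ex_id_ren', simp_all)
next
  case (M_local E s1 X)
  from M_local(2) obtain s2 where s2: "E s2 = None" "P2 = {#}" "T2 = openT 0 s2 X" "E2 = E(s2 \<mapsto> False)"
    by (rule ms_LocalE) auto
  let ?\<pi> = "sw s1 s2"
  have fx: "\<forall>a\<in>dom E. ?\<pi> a = a" using s2 M_local by (auto simp: sw_def)
  have "renT ?\<pi> X = X" using M_local(3) fx by (intro renT_fix) auto
  then have "T2 = renT ?\<pi> (openT 0 s1 X)" using s2 by (simp add: renT_openT sw_def)
  moreover have "E2 = renE ?\<pi> (E(s1 \<mapsto> False))"
    using s2 M_local(1) unfolding renE_def inv_sw by (auto simp: sw_def fun_eq_iff)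
  moreover have "P2 = image_mset (renT ?\<pi>) {#}" using s2 by simp
  ultimately show ?case using fx bij_sw[of s1 s2] by blast
next
  case (M_spawn T E)
  from M_spawn(1) show ?case by (rule ms_SpawnE) (rule ex_id_ren', simp_all)
next
  case (M_call A xs T ss E)
  from M_call(3) show ?case
  proof (rule ms_CallE)
    fix xs' T' ss'
    assume "map FreeS ss = map FreeS ss'" "P2 = {#}"
      "T2 = renT (substf xs' ss') T'" "E2 = E" "D A = (xs', T')" "length xs' = length ss'"
    moreover have "ss = ss'" using \<open>map FreeS ss = map FreeS ss'\<close>
      by (simp add: inj_map_eq_map inj_def)
    ultimately have "T2 = renT (substf xs ss) T" "P2 = {#}" "E2 = E" using M_call(1) by auto
    then show ?thesis using ex_id_ren[of "dom E" "renT (substf xs ss) T" "{#}" E] by simp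
  qed
next
  case (M_whennil E r)
  from M_whennil(2) show ?case by (rule ms_WhenE) (rule ex_id_ren', simp_all)
next
  case (M_when E r T P T' E')
  from M_when(4) obtain T2' where h: "ms D T E P2 T2' E2" "T2 = When r T2'"
    by (rule ms_WhenE) (use M_when(2) in auto)
  obtain \<pi> where p: "bij \<pi>" "\<forall>a\<in>dom E. \<pi> a = a" "T2' = renT \<pi> T'"
     "P2 = image_mset (renT \<pi>) P" "E2 = renE \<pi> E'"
    using M_when(3)[OF h(1)] M_when(5) by auto
  have "renr \<pi> r = r" using p(2) M_when(5) by (intro renr_fix) auto
  then show ?case using p h by (intro exI[of _ \<pi>]) auto
next
  case (M_watchnil r E)
  from M_watchnil(1) show ?case by (rule ms_WatchE) (rule ex_id_ren', simp_all)
next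
  case (M_watch T E P T' E' r)
  from M_watch(3) obtain T2' where h: "ms D T E P2 T2' E2" "T2 = Watch r T2'"
    by (rule ms_WatchE) (use M_watch(1) in auto)
  obtain \<pi> where p: "bij \<pi>" "\<forall>a\<in>dom E. \<pi> a = a" "T2' = renT \<pi> T'"
     "P2 = image_mset (renT \<pi>) P" "E2 = renE \<pi> E'"
    using M_watch(2)[OF h(1)] M_watch(4) by auto
  have "renr \<pi> r = r" using p(2) M_watch(4) by (intro renr_fix) auto
  then show ?case using p h by (intro exI[of _ \<pi>]) auto
next
  case (M_seqnil X E)
  from M_seqnil(1) show ?case by (rule ms_SeqE) (rule ex_id_ren', simp_all)
next
  case (M_seq T1 E P T1' E' X)
  from M_seq(3) obtain T2' where h: "ms D T1 E P2 T2' E2" "T2 = Seq T2' X"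
    by (rule ms_SeqE) (use M_seq(1) in auto)
  obtain \<pi> where p: "bij \<pi>" "\<forall>a\<in>dom E. \<pi> a = a" "T2' = renT \<pi> T1'"
     "P2 = image_mset (renT \<pi>) P" "E2 = renE \<pi> E'"
    using M_seq(2)[OF h(1)] M_seq(4) by auto
  have "renT \<pi> X = X" using p(2) M_seq(4) by (intro renT_fix) auto
  then show ?case using p h by (intro exI[of _ \<pi>]) auto
qed



inductive mss :: "tdefs \<Rightarrow> thread \<Rightarrow> env \<Rightarrow> thread multiset \<Rightarrow> thread \<Rightarrow> env \<Rightarrow> bool"
  for D :: tdefs where
  mss_refl: "mss D T E {#} T E"
| mss_step: "ms D T E P1 T1 E1 \<Longrightarrow> mss D T1 E1 P2 T2 E2 \<Longrightarrow> mss D T E (P1 + P2) T2 E2"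

lemma mss_single: "ms D T E P T' E' \<Longrightarrow> mss D T E P T' E'"
  using mss_step[OF _ mss_refl] by fastforce

lemma mss_trans: "mss D T E P1 T1 E1 \<Longrightarrow> mss D T1 E1 P2 T2 E2 \<Longrightarrow> mss D T E (P1 + P2) T2 E2"
  by (induction rule: mss.induct) (auto simp: add.assoc intro: mss_step)

lemma trues_le_trans: "trues_le A B \<Longrightarrow> trues_le B C \<Longrightarrow> trues_le A C"
  by (auto simp: trues_le_def)

lemma mss_mono: "mss D T E P T' E' \<Longrightarrow> trues_le E E'"
  by (induction rule: mss.induct) (auto simp: trues_le_def dest!: ms_mono)

lemma mss_seq: "mss D T E P T' E' \<Longrightarrow> mss D (Seq T X) E P (Seq T' X) E'"
  by (induction rule: mss.induct) (auto intro: mss.intros ms.intros)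

lemma mss_watch: "mss D T E P T' E' \<Longrightarrow> mss D (Watch r T) E P (Watch r T') E'"
  by (induction rule: mss.induct) (auto intro: mss.intros ms.intros)

lemma mss_when: "mss D T E P T' E' \<Longrightarrow> envv E r = Some True \<Longrightarrow> mss D (When r T) E P (When r T') E'"
proof (induction rule: mss.induct)
  case (mss_refl T E)
  show ?case by (rule mss.mss_refl)
next
  case (mss_step T E P1 T1 E1 P2 T2 E2)
  then have "envv E1 r = Some True" using ms_mono trues_le_envv by blast
  then show ?case using mss_step by (auto intro: mss.mss_step ms.M_when)
qed

lemma step_mono: "step D T E P T' E' \<Longrightarrow> trues_le E E'"
proof (induction rule: step.induct)
  case (T3 E s' T P T' E')
  have "trues_le E (E(s' \<mapsto> False))" using T3(1) by (auto simp: trues_le_def)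
  then show ?case using T3(3) by (rule trues_le_trans)
next
  case (T11 T1 E P1 E1 T2 P2 T' E')
  then show ?case using trues_le_trans by blast
qed (auto simp: trues_le_def)

lemma step_mss: "step D T E P T' E' \<Longrightarrow> mss D T E P T' E'"
proof (induction rule: step.induct)
  case (T1 E)
  show ?case by (rule mss_refl)
next
  case (T2 s E)
  then show ?case by (intro mss_single ms.intros)
next
  case (T3 E s' T P T' E')
  then show ?case using mss_step[OF ms.M_local[of E s' D T, OF T3(1)] T3(3)] by simp
next
  case (T4 T E)
  then show ?case by (intro mss_single ms.intros)
next
  case (T5 A xs T ss E P T' E')
  then show ?case using mss_step[OF ms.M_call[of D A xs T ss E, OF T5(1) T5(2)] T5(4)] by simp
next
  case (T6 E r T)
  show ?case by (rule mss_refl)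
next
  case (T7 E r T P E')
  have "envv E' r = Some True" using T7 step_mono trues_le_envv by blast
  then show ?case using mss_trans[OF mss_when[OF T7(3) T7(1)] mss_single[OF ms.M_whennil]] by simp
next
  case (T8 E r T P T' E')
  then show ?case by (intro mss_when)
next
  case (T9 T E P E' r)
  then show ?case using mss_trans[OF mss_watch[OF T9(2)] mss_single[OF ms.M_watchnil]] by simp
next
  case (T10 T E P T' E' r)
  then show ?case by (intro mss_watch)
next
  case (T11 T1 E P1 E1 T2 P2 T' E')
  then show ?case using mss_trans[OF mss_seq[OF T11(3)] mss_step[OF ms.M_seqnil T11(4)]] by simp
next
  case (T12 T1 E P T' E' T2)
  then show ?case by (intro mss_seq)
qed

lemma step_final: "step D T E P T' E' \<Longrightarrow> \<not> ms D T' E' P2 T2 E2"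
proof (induction arbitrary: P2 T2 E2 rule: step.induct)
  case (T6 E r T)
  then show ?case by (auto elim: ms_WhenE)
next
  case (T8 E r T P T' E')
  then show ?case by (auto elim: ms_WhenE)
next
  case (T10 T E P T' E' r)
  then show ?case by (auto elim: ms_WatchE)
next
  case (T12 T1 E P T' E' T2)
  then show ?case by (auto elim: ms_SeqE)
qed auto



type_synonym state = "thread multiset \<times> env"

inductive mstep :: "tdefs \<Rightarrow> state \<Rightarrow> state \<Rightarrow> bool" for D where
  "t \<in># P \<Longrightarrow> ms D t E Pt t' E' \<Longrightarrow> mstep D (P, E) (P - {#t#} + {#t'#} + Pt, E')"

inductive mrun :: "tdefs \<Rightarrow> state \<Rightarrow> nat \<Rightarrow> state \<Rightarrow> bool" for D where
  mr0: "mrun D S 0 S"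
| mrS: "mstep D S S1 \<Longrightarrow> mrun D S1 n S2 \<Longrightarrow> mrun D S (Suc n) S2"

definition mfinal :: "tdefs \<Rightarrow> state \<Rightarrow> bool" where
  "mfinal D S \<longleftrightarrow> (\<forall>t\<in>#fst S. \<forall>P t' E'. \<not> ms D t (snd S) P t' E')"

definition minv :: "state \<Rightarrow> bool" where
  "minv S \<longleftrightarrow> finite (dom (snd S)) \<and> sigP (fst S) \<subseteq> dom (snd S)"

definition renS :: "(sig \<Rightarrow> sig) \<Rightarrow> state \<Rightarrow> state" where
  "renS \<pi> S = (image_mset (renT \<pi>) (fst S), renE \<pi> (snd S))"

definition sim :: "sig set \<Rightarrow> state \<Rightarrow> state \<Rightarrow> bool" where
  "sim A S S' \<longleftrightarrow> (\<exists>\<pi>. bij \<pi> \<and> (\<forall>a\<in>A. \<pi> a = a) \<and> S' = renS \<pi> S)"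

lemma mfinal_no_step: "mfinal D S \<Longrightarrow> \<not> mstep D S S'"
  unfolding mfinal_def by (auto elim: mstep.cases)

lemma mrun_final0: "mrun D S n R \<Longrightarrow> mfinal D S \<Longrightarrow> n = 0 \<and> R = S"
  by (erule mrun.cases) (auto dest: mfinal_no_step)

lemma mrun_trans: "mrun D S n S1 \<Longrightarrow> mrun D S1 m S2 \<Longrightarrow> mrun D S (n + m) S2"
  by (induction rule: mrun.induct) (auto intro: mrun.intros)

lemma mstep_inv:
  assumes "mstep D S S'" "wf_defs D" "minv S"
  shows "minv S' \<and> dom (snd S) \<subseteq> dom (snd S')"
  using assms(1)
proof cases
  case (1 t P E Pt t' E')
  have i: "finite (dom E)" "sigP P \<subseteq> dom E" using assms(3) 1(1) unfolding minv_def by simp_all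
  have "sigT t \<subseteq> dom E" using i(2) sigT_sigP[OF 1(3)] by (rule subset_trans[rotated])
  then have h: "sigT t' \<subseteq> dom E' \<and> sigP Pt \<subseteq> dom E' \<and> dom E \<subseteq> dom E' \<and> (finite (dom E) \<longrightarrow> finite (dom E'))"
    using ms_inv[OF 1(4) assms(2)] by blast
  have "sigP (P - {#t#}) \<subseteq> dom E" using i(2) sigP_diff[of P "{#t#}"] by (rule subset_trans[rotated])
  then have "sigP (P - {#t#} + {#t'#} + Pt) \<subseteq> dom E'" using h
    unfolding sigP_plus sigP_single by blast
  moreover have "finite (dom E')" using h i by blast
  ultimately show ?thesis using h 1 unfolding minv_def by simp
qed

lemma mrun_inv: "mrun D S n R \<Longrightarrow> wf_defs D \<Longrightarrow> minv S \<Longrightarrow> minv R \<and> dom (snd S) \<subseteq> dom (snd R)"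
proof (induction rule: mrun.induct)
  case (mr0 S)
  then show ?case by simp
next
  case (mrS S S1 n S2)
  then have "minv S1 \<and> dom (snd S) \<subseteq> dom (snd S1)" using mstep_inv by blast
  then show ?case using mrS.IH mrS.prems by blast
qed

lemma mss_lift: "mss D t E Pt t' E' \<Longrightarrow> t \<in># P \<Longrightarrow> \<exists>k. mrun D (P, E) k (P - {#t#} + {#t'#} + Pt, E')"
proof (induction arbitrary: P rule: mss.induct)
  case (mss_refl T E)
  then show ?case using mr0[of D "(P, E)"] by auto
next
  case (mss_step T E P1 T1 E1 P2 T2 E2)
  have st: "mstep D (P, E) (P - {#T#} + {#T1#} + P1, E1)"
    using mss_step by (intro mstep.intros)
  obtain k where "mrun D (P - {#T#} + {#T1#} + P1, E1) k
       ((P - {#T#} + {#T1#} + P1) - {#T1#} + {#T2#} + P2, E2)"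
    using mss_step.IH[of "P - {#T#} + {#T1#} + P1"] by auto
  then have "mrun D (P, E) (Suc k) ((P - {#T#} + {#T1#} + P1) - {#T1#} + {#T2#} + P2, E2)"
    by (rule mrS[OF st])
  moreover have "(P - {#T#} + {#T1#} + P1) - {#T1#} + {#T2#} + P2 = P - {#T#} + {#T2#} + (P1 + P2)"
    by (simp add: add.commute add.left_commute)
  ultimately show ?case by metis
qed

lemma image_renT_comp: "image_mset (renT f) (image_mset (renT g) P) = image_mset (renT (f \<circ> g)) P"
  by (simp add: image_mset.compositionality comp_def renT_comp)

lemma renT_inv[simp]: "bij \<pi> \<Longrightarrow> renT (inv \<pi>) (renT \<pi> t) = t"
  by (simp add: renT_comp bij_is_inj renT_id_fun)

lemma renS_inv[simp]: "bij \<pi> \<Longrightarrow> renS (inv \<pi>) (renS \<pi> S) = S"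
  by (simp add: renS_def image_renT_comp bij_is_inj renT_id_fun)

lemma renS_comp: "bij \<pi> \<Longrightarrow> bij \<sigma> \<Longrightarrow> renS \<pi> (renS \<sigma> S) = renS (\<pi> \<circ> \<sigma>) S"
  by (simp add: renS_def image_renT_comp renE_comp)

lemma renS_id[simp]: "renS id S = S"
  by (simp add: renS_def renT_id_fun)

lemma mstep_equiv:
  assumes "mstep D S S'" "wf_defs D" "bij \<pi>"
  shows "mstep D (renS \<pi> S) (renS \<pi> S')"
  using assms(1)
proof cases
  case (1 t P E Pt t' E')
  have "mstep D (image_mset (renT \<pi>) P, renE \<pi> E)
     (image_mset (renT \<pi>) P - {#renT \<pi> t#} + {#renT \<pi> t'#} + image_mset (renT \<pi>) Pt, renE \<pi> E')"
    using 1 ms_equiv[OF 1(4) assms(2,3)] by (intro mstep.intros) auto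
  moreover have "image_mset (renT \<pi>) (P - {#t#} + {#t'#} + Pt) =
      image_mset (renT \<pi>) P - {#renT \<pi> t#} + {#renT \<pi> t'#} + image_mset (renT \<pi>) Pt"
    using 1 by (simp add: image_mset_Diff)
  ultimately show ?thesis using 1 by (simp add: renS_def)
qed

lemma mrun_equiv: "mrun D S n R \<Longrightarrow> wf_defs D \<Longrightarrow> bij \<pi> \<Longrightarrow> mrun D (renS \<pi> S) n (renS \<pi> R)"
  by (induction rule: mrun.induct) (auto intro: mrun.intros mstep_equiv)

lemma mfinal_equiv:
  assumes "mfinal D S" "wf_defs D" "bij \<pi>"
  shows "mfinal D (renS \<pi> S)"
  unfolding mfinal_def
proof (intro ballI allI notI)
  fix t P t' E'
  assume t: "t \<in># fst (renS \<pi> S)" and m: "ms D t (snd (renS \<pi> S)) P t' E'"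
  obtain u where u: "u \<in># fst S" "t = renT \<pi> u" using t by (auto simp: renS_def)
  have bi: "bij (inv \<pi>)" using assms(3) by (simp add: bij_imp_bij_inv)
  have "ms D (renT (inv \<pi>) t) (renE (inv \<pi>) (snd (renS \<pi> S))) (image_mset (renT (inv \<pi>)) P)
          (renT (inv \<pi>) t') (renE (inv \<pi>) E')"
    using ms_equiv[OF m assms(2) bi] .
  then have "ms D u (snd S) (image_mset (renT (inv \<pi>)) P) (renT (inv \<pi>) t') (renE (inv \<pi>) E')"
    using u assms(3) by (simp add: renS_def)
  then show False using assms(1) u unfolding mfinal_def by blast
qed

lemma sim_refl: "sim A S S"
  unfolding sim_def by (rule exI[of _ id]) auto

lemma sim_sym: "sim A S S' \<Longrightarrow> sim A S' S"
  unfolding sim_def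
proof (elim exE conjE)
  fix \<pi> assume p: "bij \<pi>" "\<forall>a\<in>A. \<pi> a = a" "S' = renS \<pi> S"
  have "\<forall>a\<in>A. inv \<pi> a = a" using p by (metis bij_inv_eq_iff)
  then show "\<exists>\<pi>. bij \<pi> \<and> (\<forall>a\<in>A. \<pi> a = a) \<and> S = renS \<pi> S'"
    using p by (intro exI[of _ "inv \<pi>"]) (auto simp: bij_imp_bij_inv)
qed

lemma sim_trans: "sim A S1 S2 \<Longrightarrow> sim A S2 S3 \<Longrightarrow> sim A S1 S3"
  unfolding sim_def
proof (elim exE conjE)
  fix \<pi> \<sigma> assume p: "bij \<pi>" "\<forall>a\<in>A. \<pi> a = a" "S2 = renS \<pi> S1"
    and q: "bij \<sigma>" "\<forall>a\<in>A. \<sigma> a = a" "S3 = renS \<sigma> S2"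
  then show "\<exists>\<pi>. bij \<pi> \<and> (\<forall>a\<in>A. \<pi> a = a) \<and> S3 = renS \<pi> S1"
    by (intro exI[of _ "\<sigma> \<circ> \<pi>"]) (auto simp: bij_comp renS_comp)
qed

lemma sim_mono: "A \<subseteq> B \<Longrightarrow> sim B S S' \<Longrightarrow> sim A S S'"
  unfolding sim_def by blast

lemma sim_mrun:
  assumes "sim A S S'" "mrun D S n R" "mfinal D R" "wf_defs D"
  shows "\<exists>R'. mrun D S' n R' \<and> mfinal D R' \<and> sim A R R'"
proof -
  obtain \<pi> where p: "bij \<pi>" "\<forall>a\<in>A. \<pi> a = a" "S' = renS \<pi> S" using assms(1) unfolding sim_def by blast
  have "sim A R (renS \<pi> R)" unfolding sim_def by (rule exI[of _ \<pi>]) (simp add: p(1) p(2))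
  then show ?thesis using mrun_equiv[OF assms(2,4) p(1)] mfinal_equiv[OF assms(3,4) p(1)] p(3) by blast
qed



lemma ms_sig:
  assumes "t \<in># P" "minv (P, E)"
  shows "sigT t \<subseteq> dom E"
proof -
  have "sigP P \<subseteq> dom E" using assms(2) unfolding minv_def by simp
  with sigT_sigP[OF assms(1)] show ?thesis by (rule subset_trans)
qed

lemma class_change:
  assumes "E' = E \<or> (\<exists>s. E s \<noteq> None \<and> E' = E(s \<mapsto> True)) \<or> (\<exists>s. E s = None \<and> E' = E(s \<mapsto> False))"
    and "E' x \<noteq> E x"
  shows "(E x \<noteq> None \<and> E' x = Some True) \<or> (E x = None \<and> E' x = Some False)"
  using assms(1)
proof (elim disjE exE conjE)
  assume "E' = E" then show ?thesis using assms(2) by simp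
next
  fix s assume a: "E s \<noteq> None" "E' = E(s \<mapsto> True)"
  then have "x = s" using assms(2) by (cases "x = s") simp_all
  then show ?thesis using a by simp
next
  fix s assume a: "E s = None" "E' = E(s \<mapsto> False)"
  then have "x = s" using assms(2) by (cases "x = s") simp_all
  then show ?thesis using a by simp
qed

lemma class_alloc_unique:
  assumes "E' = E \<or> (\<exists>s. E s \<noteq> None \<and> E' = E(s \<mapsto> True)) \<or> (\<exists>s. E s = None \<and> E' = E(s \<mapsto> False))"
    and "E x = None" "E' x \<noteq> None" "E z = None" "E' z \<noteq> None"
  shows "z = x"
proof -
  have "E' x \<noteq> E x" "E' z \<noteq> E z" using assms(2-5) by simp_all
  then have "E' x = Some False" "E' z = Some False"
    using class_change[OF assms(1)] assms(2,4) by blast+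
  from assms(1) show ?thesis
  proof (elim disjE exE conjE)
    assume "E' = E" then show ?thesis using assms(2,3) by simp
  next
    fix s assume a: "E s \<noteq> None" "E' = E(s \<mapsto> True)"
    then show ?thesis using \<open>E' x = Some False\<close> assms(2) by (cases "x = s") simp_all
  next
    fix s assume a: "E s = None" "E' = E(s \<mapsto> False)"
    have "x = s" using a assms(2,3) by (cases "x = s") simp_all
    moreover have "z = s" using a assms(4,5) by (cases "z = s") simp_all
    ultimately show ?thesis by simp
  qed
qed

lemma image_renT_fixP:
  "sigP P \<subseteq> A \<Longrightarrow> \<forall>a\<in>A. \<pi> a = a \<Longrightarrow> image_mset (renT \<pi>) P = P"
proof (induction P)
  case empty
  then show ?case by simp
next
  case (add x P)
  then have "renT \<pi> x = x" by (intro renT_fix) auto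
  then show ?case using add by auto
qed

lemma diamond_nc:
  assumes wf: "wf_defs D" and tP: "t \<in># P" and uP: "u \<in># P - {#t#}"
    and st: "ms D t E Pt t' Et" and su: "ms D u E Pu u' Eu" and inv: "minv (P, E)"
    and nc: "\<forall>x. E x = None \<longrightarrow> Eu x = None \<or> Et x = None"
  shows "\<exists>S3. mstep D (P - {#t#} + {#t'#} + Pt, Et) S3 \<and> mstep D (P - {#u#} + {#u'#} + Pu, Eu) S3"
proof -
  have uP': "u \<in># P" using uP by (meson in_diffD)
  have sgt: "sigT t \<subseteq> dom E" using tP inv by (rule ms_sig)
  have sgu: "sigT u \<subseteq> dom E" using uP' inv by (rule ms_sig)
  have ct: "Et = E \<or> (\<exists>s. E s \<noteq> None \<and> Et = E(s \<mapsto> True)) \<or> (\<exists>s. E s = None \<and> Et = E(s \<mapsto> False))"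
    using ms_class[OF st sgt] .
  have cu: "Eu = E \<or> (\<exists>s. E s \<noteq> None \<and> Eu = E(s \<mapsto> True)) \<or> (\<exists>s. E s = None \<and> Eu = E(s \<mapsto> False))"
    using ms_class[OF su sgu] .
  define G where "G = (\<lambda>x. if Eu x = E x then Et x else Eu x)"
  have G2: "G = (\<lambda>x. if Et x = E x then Eu x else Et x)"
  proof (rule ext)
    fix x
    show "G x = (if Et x = E x then Eu x else Et x)"
    proof (cases "Eu x = E x \<or> Et x = E x")
      case True
      then show ?thesis unfolding G_def by auto
    next
      case False
      then have "Eu x = Et x"
        using class_change[OF ct, of x] class_change[OF cu, of x] nc by auto
      then show ?thesis unfolding G_def by auto
    qed
  qed
  have n1: "\<forall>x. E x = None \<longrightarrow> Eu x \<noteq> None \<longrightarrow> Et x = None"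
  proof (intro allI impI)
    fix x assume a: "E x = None" "Eu x \<noteq> None"
    have "Eu x = None \<or> Et x = None" by (rule nc[rule_format, OF a(1)])
    then show "Et x = None" using a(2) by (cases "Et x") simp_all
  qed
  have n2: "\<forall>x. E x = None \<longrightarrow> Et x \<noteq> None \<longrightarrow> Eu x = None"
  proof (intro allI impI)
    fix x assume a: "E x = None" "Et x \<noteq> None"
    have "Eu x = None \<or> Et x = None" by (rule nc[rule_format, OF a(1)])
    then show "Eu x = None" using a(2) by (cases "Eu x") simp_all
  qed
  have m1: "ms D u Et Pu u' G"
    unfolding G_def by (rule ms_frame[OF su ms_mono[OF st] n1])
  have m2: "ms D t Eu Pt t' G"
    unfolding G2 by (rule ms_frame[OF st ms_mono[OF su] n2])
  define Q where "Q = P - {#t#} - {#u#}"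
  have Q1: "P - {#t#} = add_mset u Q" unfolding Q_def by (rule insert_DiffM[OF uP, symmetric])
  have Pq: "P = add_mset t (add_mset u Q)" using insert_DiffM[OF tP] Q1 by simp
  have Q2: "P - {#u#} = add_mset t Q" unfolding Pq by (simp add: add_mset_commute)
  have uin: "u \<in># P - {#t#} + {#t'#} + Pt" unfolding Q1 by simp
  have tin: "t \<in># P - {#u#} + {#u'#} + Pu" unfolding Q2 by simp
  have s1: "mstep D (P - {#t#} + {#t'#} + Pt, Et) ((P - {#t#} + {#t'#} + Pt) - {#u#} + {#u'#} + Pu, G)"
    by (rule mstep.intros[OF uin m1])
  have s2: "mstep D (P - {#u#} + {#u'#} + Pu, Eu) ((P - {#u#} + {#u'#} + Pu) - {#t#} + {#t'#} + Pt, G)"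
    by (rule mstep.intros[OF tin m2])
  have e1: "(P - {#t#} + {#t'#} + Pt) - {#u#} + {#u'#} + Pu = Q + {#t'#} + Pt + {#u'#} + Pu"
    unfolding Q1 by simp
  have e2: "(P - {#u#} + {#u'#} + Pu) - {#t#} + {#t'#} + Pt = Q + {#u'#} + Pu + {#t'#} + Pt"
    unfolding Q2 by simp
  have eq: "(P - {#t#} + {#t'#} + Pt) - {#u#} + {#u'#} + Pu = (P - {#u#} + {#u'#} + Pu) - {#t#} + {#t'#} + Pt"
    unfolding e1 e2 by (rule multiset_eqI) simp
  have s2': "mstep D (P - {#u#} + {#u'#} + Pu, Eu) ((P - {#t#} + {#t'#} + Pt) - {#u#} + {#u'#} + Pu, G)"
    using s2 unfolding eq[symmetric] .
  show ?thesis by (rule exI, rule conjI, rule s1, rule s2')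
qed

lemma renE_sw_fix:
  assumes "E x = None" "E y = None"
  shows "renE (sw x y) E = E"
proof (rule ext)
  fix z
  have "renE (sw x y) E z = E (sw x y z)" unfolding renE_def inv_sw by simp
  also have "\<dots> = E z" using assms unfolding sw_def by (cases "z = x"; cases "z = y") simp_all
  finally show "renE (sw x y) E z = E z" .
qed

lemma diamond:
  assumes wf: "wf_defs D" and tP: "t \<in># P" and uP: "u \<in># P - {#t#}"
    and st: "ms D t E Pt t' Et" and su: "ms D u E Pu u' Eu" and inv: "minv (P, E)"
  shows "\<exists>X Y. mstep D (P - {#t#} + {#t'#} + Pt, Et) X \<and> mstep D (P - {#u#} + {#u'#} + Pu, Eu) Y
              \<and> sim (dom E) X Y"
proof (cases "\<forall>x. E x = None \<longrightarrow> Eu x = None \<or> Et x = None")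
  case True
  obtain S3 where h: "mstep D (P - {#t#} + {#t'#} + Pt, Et) S3" "mstep D (P - {#u#} + {#u'#} + Pu, Eu) S3"
    using diamond_nc[OF assms True] by blast
  show ?thesis by (rule exI, rule exI, rule conjI, rule h(1), rule conjI, rule h(2), rule sim_refl)
next
  case False
  then obtain x where x: "E x = None" "Eu x \<noteq> None" "Et x \<noteq> None" by blast
  have uP': "u \<in># P" using uP by (meson in_diffD)
  have sgt: "sigT t \<subseteq> dom E" using tP inv by (rule ms_sig)
  have sgu: "sigT u \<subseteq> dom E" using uP' inv by (rule ms_sig)
  have fE: "finite (dom E)" using inv unfolding minv_def by simp
  have it: "dom E \<subseteq> dom Et \<and> finite (dom Et)" using ms_inv[OF st wf sgt] fE by blast
  have iu: "dom E \<subseteq> dom Eu \<and> finite (dom Eu)" using ms_inv[OF su wf sgu] fE by blast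
  obtain y where y: "y \<notin> dom Et \<union> dom Eu"
    using ex_new_if_finite[of "dom Et \<union> dom Eu"] it iu by auto
  have yE: "E y = None" using y it by blast
  have xy: "x \<noteq> y" using x y by blast
  let ?\<sigma> = "sw x y"
  have bs: "bij ?\<sigma>" by (rule bij_sw)
  have fixE: "\<forall>a\<in>dom E. ?\<sigma> a = a" using x yE by (auto simp: sw_def)
  have ru: "renT ?\<sigma> u = u" using sgu fixE by (intro renT_fix) blast
  have su2: "ms D u E (image_mset (renT ?\<sigma>) Pu) (renT ?\<sigma> u') (renE ?\<sigma> Eu)"
    using ms_equiv[OF su wf bs] unfolding ru renE_sw_fix[OF x(1) yE] .
  have cu: "Eu = E \<or> (\<exists>s. E s \<noteq> None \<and> Eu = E(s \<mapsto> True)) \<or> (\<exists>s. E s = None \<and> Eu = E(s \<mapsto> False))"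
    using ms_class[OF su sgu] .
  have nc: "\<forall>z. E z = None \<longrightarrow> renE ?\<sigma> Eu z = None \<or> Et z = None"
  proof (intro allI impI)
    fix z assume z: "E z = None"
    have r: "renE ?\<sigma> Eu z = Eu (?\<sigma> z)" unfolding renE_def inv_sw by simp
    show "renE ?\<sigma> Eu z = None \<or> Et z = None"
    proof (cases "z = x")
      case True
      then show ?thesis using r y by (simp add: sw_def domIff)
    next
      case False
      show ?thesis
      proof (cases "z = y")
        case True
        then show ?thesis using y by (simp add: domIff)
      next
        case False
        then have "renE ?\<sigma> Eu z = Eu z" using r \<open>z \<noteq> x\<close> by (simp add: sw_def)
        moreover have "Eu z = None"
          using class_alloc_unique[OF cu x(1) x(2) z] \<open>z \<noteq> x\<close> by blast
        ultimately show ?thesis by simp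
      qed
    qed
  qed
  obtain S3 where S3: "mstep D (P - {#t#} + {#t'#} + Pt, Et) S3"
    "mstep D (P - {#u#} + {#renT ?\<sigma> u'#} + image_mset (renT ?\<sigma>) Pu, renE ?\<sigma> Eu) S3"
    using diamond_nc[OF wf tP uP st su2 inv nc] by blast
  have fixP: "image_mset (renT ?\<sigma>) (P - {#u#}) = P - {#u#}"
  proof (rule image_renT_fixP[OF _ fixE])
    show "sigP (P - {#u#}) \<subseteq> dom E" using inv sigP_diff[of P "{#u#}"] unfolding minv_def by auto
  qed
  have ss: "?\<sigma> \<circ> ?\<sigma> = id" by (rule sw_invol)
  have "renS ?\<sigma> (P - {#u#} + {#renT ?\<sigma> u'#} + image_mset (renT ?\<sigma>) Pu, renE ?\<sigma> Eu)
        = (P - {#u#} + {#u'#} + Pu, Eu)"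
    unfolding renS_def using fixP
    by (simp add: image_renT_comp renT_comp renE_comp[OF bs bs] ss renT_id_fun)
  then have "mstep D (P - {#u#} + {#u'#} + Pu, Eu) (renS ?\<sigma> S3)"
    using mstep_equiv[OF S3(2) wf bs] by simp
  moreover have "sim (dom E) S3 (renS ?\<sigma> S3)"
    unfolding sim_def using bs fixE by blast
  ultimately show ?thesis using S3(1) by blast
qed



lemma mrun_step:
  assumes "mrun D S n R" "mfinal D R" "minv S" "mstep D S S1" "wf_defs D"
  shows "\<exists>m R'. n = Suc m \<and> mrun D S1 m R' \<and> mfinal D R' \<and> sim (dom (snd S)) R R'"
  using assms
proof (induction arbitrary: S1 rule: mrun.induct)
  case (mr0 S)
  then show ?case using mfinal_no_step by blast
next
  case (mrS S SU n R)
  from mrS.hyps(1) obtain u P E Pu u' Eu where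
    hu: "S = (P, E)" "u \<in># P" "ms D u E Pu u' Eu" "SU = (P - {#u#} + {#u'#} + Pu, Eu)"
    by (cases rule: mstep.cases) auto
  from mrS.prems(3) obtain t Pt t' Et where
    ht: "t \<in># P" "ms D t E Pt t' Et" "S1 = (P - {#t#} + {#t'#} + Pt, Et)"
    using hu(1) by (cases rule: mstep.cases) auto
  have inv: "minv (P, E)" using mrS.prems(2) hu(1) by simp
  have sE: "snd S = E" using hu(1) by simp
  have invU: "minv SU \<and> dom (snd S) \<subseteq> dom (snd SU)"
    using mstep_inv[OF mrS.hyps(1) mrS.prems(4) mrS.prems(2)] .
  show ?case
  proof (cases "t = u")
    case True
    have sgu: "sigT u \<subseteq> dom E" using hu(2) inv by (rule ms_sig)
    obtain \<pi> where p: "bij \<pi>" "\<forall>a\<in>dom E. \<pi> a = a" "t' = renT \<pi> u'"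
       "Pt = image_mset (renT \<pi>) Pu" "Et = renE \<pi> Eu"
      using ms_det[OF hu(3) _ sgu] ht(2) True by blast
    have fixP: "image_mset (renT \<pi>) (P - {#u#}) = P - {#u#}"
    proof (rule image_renT_fixP[OF _ p(2)])
      show "sigP (P - {#u#}) \<subseteq> dom E" using inv sigP_diff[of P "{#u#}"] unfolding minv_def by auto
    qed
    have "S1 = renS \<pi> SU" using hu(4) ht(3) p fixP True by (simp add: renS_def)
    then have "sim (dom E) SU S1" unfolding sim_def using p by blast
    then obtain R' where "mrun D S1 n R'" "mfinal D R'" "sim (dom E) R R'"
      using sim_mrun[OF _ mrS.hyps(2) mrS.prems(1) mrS.prems(4)] by blast
    then show ?thesis unfolding sE by blast
  next
    case False
    then have uP: "u \<in># P - {#t#}" using hu(2) by (simp add: in_diff_count)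
    obtain X Y where XY: "mstep D S1 X" "mstep D SU Y" "sim (dom E) X Y"
      using diamond[OF mrS.prems(4) ht(1) uP ht(2) hu(3) inv] ht(3) hu(4) by blast
    obtain m RY where r: "n = Suc m" "mrun D Y m RY" "mfinal D RY" "sim (dom (snd SU)) R RY"
      using mrS.IH[OF mrS.prems(1) _ XY(2) mrS.prems(4)] invU by blast
    have r2: "sim (dom E) R RY" using sim_mono[OF _ r(4)] invU hu(1) by simp
    obtain RX where rx: "mrun D X m RX" "mfinal D RX" "sim (dom E) RY RX"
      using sim_mrun[OF sim_sym[OF XY(3)] r(2) r(3) mrS.prems(4)] by blast
    have "mrun D S1 (Suc m) RX" using XY(1) rx(1) by (rule mrun.mrS)
    then show ?thesis unfolding sE using r(1) rx sim_trans[OF r2 rx(3)] by blast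
  qed
qed

lemma mrun_det:
  assumes "mrun D S n R1" "mfinal D R1" "mrun D S m R2" "mfinal D R2" "minv S" "wf_defs D"
  shows "sim (dom (snd S)) R1 R2"
  using assms
proof (induction n arbitrary: S R1 m R2)
  case 0
  then have "R1 = S" by (auto elim: mrun.cases)
  then have "R2 = S" using mrun_final0[OF 0(3)] 0(2) by simp
  then show ?case using \<open>R1 = S\<close> sim_refl by simp
next
  case (Suc n)
  show ?case
  proof (cases m)
    case 0
    then have "R2 = S" using Suc(4) by (auto elim: mrun.cases)
    then have "mfinal D S" using Suc(5) by simp
    then show ?thesis using mrun_final0[OF Suc(2)] by simp
  next
    case (Suc j)
    then obtain S2 where s2: "mstep D S S2" "mrun D S2 j R2"
      using \<open>mrun D S m R2\<close> by (auto elim: mrun.cases)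
    obtain R1' where r: "mrun D S2 n R1'" "mfinal D R1'" "sim (dom (snd S)) R1 R1'"
      using mrun_step[OF \<open>mrun D S (Suc n) R1\<close> \<open>mfinal D R1\<close> \<open>minv S\<close> s2(1) \<open>wf_defs D\<close>] by auto
    have inv2: "minv S2 \<and> dom (snd S) \<subseteq> dom (snd S2)"
      using mstep_inv[OF s2(1) \<open>wf_defs D\<close> \<open>minv S\<close>] .
    have "sim (dom (snd S2)) R1' R2"
      using Suc.IH[OF r(1) r(2) s2(2) \<open>mfinal D R2\<close> _ \<open>wf_defs D\<close>] inv2 by blast
    then have "sim (dom (snd S)) R1' R2" using sim_mono inv2 by blast
    then show ?thesis using sim_trans[OF r(3)] by blast
  qed
qed

lemma instant_mrun:
  assumes "instant D P E P'' E''" "wf_defs D" "minv (P, E)"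
  shows "\<exists>Pf n. mrun D (P, E) n (Pf, E'') \<and> mfinal D (Pf, E'') \<and> P'' = image_mset (abortT E'') Pf"
  using assms
proof (induction rule: instant.induct)
  case (P1 P E)
  have "mfinal D (P, E)"
    unfolding mfinal_def using P1(1) step_final unfolding stuck_def by fastforce
  then show ?case using mrun.mr0 by blast
next
  case (P2 T P E P' T' E' P'' E'')
  obtain k where k: "mrun D (P, E) k (P - {#T#} + {#T'#} + P', E')"
    using mss_lift[OF step_mss[OF P2(3)] P2(1)] by blast
  have "minv (P - {#T#} + {#T'#} + P', E')" using mrun_inv[OF k P2(6) P2(7)] by blast
  then obtain Pf n where "mrun D (P - {#T#} + {#T'#} + P', E') n (Pf, E'')" "mfinal D (Pf, E'')"
      "P'' = image_mset (abortT E'') Pf"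
    using P2.IH P2(6) by blast
  then show ?case using mrun_trans[OF k] by blast
qed

lemma abortT_ren: "bij \<pi> \<Longrightarrow> abortT (renE \<pi> E) (renT \<pi> T) = renT \<pi> (abortT E T)"
  by (induction T) (auto simp: envv_ren)

lemma dom_init_env: "I \<subseteq> Intf \<Longrightarrow> dom (init_env Intf I P) = Intf \<union> sigP P"
  unfolding init_env_def dom_def by auto

lemma key:
  assumes wf: "wf_defs D" and fin: "finite Intf" and I: "I \<subseteq> Intf"
    and t1: "io_trans D Intf P I O1 P1" and t2: "io_trans D Intf P I O2 P2"
  shows "O1 = O2 \<and> eq_ren Intf P1 P2"
proof -
  let ?E = "init_env Intf I P"
  obtain F1 where f1: "instant D P ?E P1 F1" "O1 = {s \<in> Intf. F1 s = Some True}"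
    using t1 unfolding io_trans_def by blast
  obtain F2 where f2: "instant D P ?E P2 F2" "O2 = {s \<in> Intf. F2 s = Some True}"
    using t2 unfolding io_trans_def by blast
  have d: "dom ?E = Intf \<union> sigP P" using I by (rule dom_init_env)
  have inv: "minv (P, ?E)" unfolding minv_def using d fin finite_sigP by auto
  obtain Pf1 n1 where r1: "mrun D (P, ?E) n1 (Pf1, F1)" "mfinal D (Pf1, F1)" "P1 = image_mset (abortT F1) Pf1"
    using instant_mrun[OF f1(1) wf inv] by blast
  obtain Pf2 n2 where r2: "mrun D (P, ?E) n2 (Pf2, F2)" "mfinal D (Pf2, F2)" "P2 = image_mset (abortT F2) Pf2"
    using instant_mrun[OF f2(1) wf inv] by blast
  have "sim (dom ?E) (Pf1, F1) (Pf2, F2)" using mrun_det[OF r1(1,2) r2(1,2) inv wf] by simp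
  then obtain \<pi> where p: "bij \<pi>" "\<forall>a\<in>dom ?E. \<pi> a = a" "Pf2 = image_mset (renT \<pi>) Pf1" "F2 = renE \<pi> F1"
    unfolding sim_def renS_def by auto
  have pI: "\<forall>a\<in>Intf. \<pi> a = a" using p(2) d by auto
  have "\<forall>s\<in>Intf. F2 s = F1 s"
  proof
    fix s assume "s \<in> Intf"
    then have "\<pi> s = s" using pI by blast
    then show "F2 s = F1 s" using p(4) renE_app[OF p(1), of F1 s] by simp
  qed
  then have o: "O1 = O2" using f1(2) f2(2) by auto
  have pp: "P2 = image_mset (renT \<pi>) P1"
    using r1(3) r2(3) p(3,4) by (simp add: multiset.map_comp comp_def abortT_ren[OF p(1)])
  have "bij_betw \<pi> (sigP P1) (sigP P2)"
    unfolding pp sigP_image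
    by (rule bij_betw_imageI[OF inj_on_subset[OF bij_is_inj[OF p(1)] subset_UNIV]]) simp
  then have "eq_ren Intf P1 P2" unfolding eq_ren_def using pI pp by blast
  then show ?thesis using o by blast
qed

theorem proposition1:
  fixes D :: tdefs and Intf :: "sig set" and P :: "thread multiset"
  assumes "wf_defs D" and "finite Intf" and "program P"
  shows "deterministic D Intf P"
proof (rule deterministic.coinduct[where X = "\<lambda>_. True"])
  show "True" by simp
next
  fix x :: "thread multiset"
  show "\<exists>P. x = P \<and> (\<forall>I O1 O2 P1 P2. I \<subseteq> Intf \<longrightarrow> io_trans D Intf P I O1 P1 \<longrightarrow>
          io_trans D Intf P I O2 P2 \<longrightarrow> O1 = O2 \<and> eq_ren Intf P1 P2 \<and> (True \<or> deterministic D Intf P1))"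
    using key[OF assms(1,2)] by blast
qed

end
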